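(* There exists a non-commutative bilinear algorithm computing the product of two $9\times 9$ matrices using $520$ multiplications. That is, $\langle 9,9,9\rangle\leq 520$.
   Context: Fix a field $\mathbb{K}$. A non-commutative bilinear algorithm for multiplying an $a\times b$ matrix $A$ by a $b\times c$ matrix $B$ using $r$ multiplications consists of $r$ products $t_k=\big(\sum_{i,j}\alpha^{(k)}_{ij}a_{ij}\big)\big(\sum_{j,l}\beta^{(k)}_{jl}b_{jl}\big)$ with scalars in $\mathbb{K}$, together with scalars $\gamma^{(k)}_{il}\in\mathbb{K}$ such that $(AB)_{il}=\sum_k\gamma^{(k)}_{il}t_k$ for all $i,l$. This identity must hold when the entries lie in an arbitrary, not necessarily commutative, associative $\mathbb{K}$-algebra. The quantity $\langle a,b,c\rangle$ denotes the minimal such $r$. *)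

theory Defs
  imports Main
begin

text \<open>Non-commutative formal series over a field 'k in the noncommuting
variables a_ij (encoded as (False,i,j)) and b_jl (encoded as (True,j,l)).  This ring contains the free
associative 'k-algebra on these variables, so an identity holds here iff it
holds in the free algebra, i.e. iff it holds for entries in every
associative 'k-algebra.\<close>

type_synonym var = "bool \<times> nat \<times> nat"
type_synonym 'k ncser = "var list \<Rightarrow> 'k"

definition ncvar :: "var \<Rightarrow> 'k::field ncser" where
  "ncvar x = (\<lambda>w. if w = [x] then 1 else 0)"

definition ncmul :: "'k::field ncser \<Rightarrow> 'k ncser \<Rightarrow> 'k ncser" where
  "ncmul p q = (\<lambda>w. \<Sum>i\<le>length w. p (take i w) * q (drop i w))"

definition avar :: "nat \<Rightarrow> nat \<Rightarrow> 'k::field ncser" where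
  "avar i j = ncvar (False, i, j)"
definition bvar :: "nat \<Rightarrow> nat \<Rightarrow> 'k::field ncser" where
  "bvar j l = ncvar (True, j, l)"

definition bilinear_algorithm ::
  "nat \<Rightarrow> nat \<Rightarrow> nat \<Rightarrow> nat \<Rightarrow>
   (nat \<Rightarrow> nat \<Rightarrow> nat \<Rightarrow> 'k::field) \<Rightarrow> (nat \<Rightarrow> nat \<Rightarrow> nat \<Rightarrow> 'k) \<Rightarrow>
   (nat \<Rightarrow> nat \<Rightarrow> nat \<Rightarrow> 'k) \<Rightarrow> bool" where
  "bilinear_algorithm a b c r \<alpha> \<beta> \<gamma> \<longleftrightarrow>
     (\<forall>i<a. \<forall>l<c.
        (\<lambda>w. \<Sum>k<r. \<gamma> k i l *
            ncmul (\<lambda>u. \<Sum>i'<a. \<Sum>j<b. \<alpha> k i' j * avar i' j u)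
                  (\<lambda>u. \<Sum>j<b. \<Sum>l'<c. \<beta> k j l' * bvar j l' u) w)
        = (\<lambda>w. \<Sum>j<b. ncmul (avar i j) (bvar j l) w))"

definition matmul_rank_le :: "'k::field itself \<Rightarrow> nat \<Rightarrow> nat \<Rightarrow> nat \<Rightarrow> nat \<Rightarrow> bool" where
  "matmul_rank_le _ a b c r \<longleftrightarrow>
     (\<exists>r'\<le>r. \<exists>(\<alpha>::nat \<Rightarrow> nat \<Rightarrow> nat \<Rightarrow> 'k) \<beta> \<gamma>. bilinear_algorithm a b c r' \<alpha> \<beta> \<gamma>)"

end

theory Submission
  imports Defs
begin

type_synonym fac = "nat \<Rightarrow> nat \<Rightarrow> int"
type_synonym trm = "fac \<times> fac \<times> fac"

definition tval :: "trm list \<Rightarrow> nat \<Rightarrow> nat \<Rightarrow> nat \<Rightarrow> nat \<Rightarrow> nat \<Rightarrow> nat \<Rightarrow> int" where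
  "tval S i' j j' l' i l = (\<Sum>t\<leftarrow>S. fst t i' j * fst (snd t) j' l' * snd (snd t) i l)"

definition valid :: "nat \<Rightarrow> nat \<Rightarrow> nat \<Rightarrow> trm list \<Rightarrow> bool" where
  "valid a b c S \<longleftrightarrow> (\<forall>i'<a. \<forall>j<b. \<forall>j'<b. \<forall>l'<c. \<forall>i<a. \<forall>l<c.
     tval S i' j j' l' i l = (if i' = i \<and> j = j' \<and> l' = l then 1 else 0))"

lemma ncmul_lin:
  fixes p q :: "'k::field ncser"
  assumes p: "\<And>u. length u \<noteq> 1 \<Longrightarrow> p u = 0" and q: "\<And>u. length u \<noteq> 1 \<Longrightarrow> q u = 0"
  shows "ncmul p q w = (case w of [x, y] \<Rightarrow> p [x] * q [y] | _ \<Rightarrow> 0)"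
proof (cases w rule: remdups_adj.cases)
  case 1
  then show ?thesis by (simp add: ncmul_def p)
next
  case (2 x)
  then show ?thesis by (simp add: ncmul_def p q)
next
  case (3 x y xs)
  show ?thesis
  proof (cases xs)
    case Nil
    show ?thesis using 3 Nil by (simp add: ncmul_def p q)
  next
    case (Cons z zs)
    have "ncmul p q w = 0"
      unfolding ncmul_def
    proof (rule sum.neutral, intro ballI)
      fix i assume "i \<in> {..length w}"
      show "p (take i w) * q (drop i w) = 0"
      proof (cases "i = 1")
        case True
        then show ?thesis using 3 Cons by (simp add: q)
      next
        case False
        then show ?thesis using \<open>i \<in> {..length w}\<close> by (simp add: p)
      qed
    qed
    then show ?thesis using 3 Cons by simp
  qed
qed


lemma sum_delta2:
  fixes c :: "nat \<Rightarrow> nat \<Rightarrow> 'k::field"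
  shows "(\<Sum>i'<a. \<Sum>j<b. c i' j * (if P \<and> xi = i' \<and> xj = j then 1 else 0)) =
         (if P \<and> xi < a \<and> xj < b then c xi xj else 0)"
proof -
  have "(\<Sum>i'<a. \<Sum>j<b. c i' j * (if P \<and> xi = i' \<and> xj = j then 1 else 0)) =
        (\<Sum>i'<a. if P \<and> xi = i' \<and> xj < b then c i' xj else 0)"
    by (rule sum.cong) (auto simp: if_distrib sum.delta cong: if_cong)
  also have "\<dots> = (if P \<and> xi < a \<and> xj < b then c xi xj else 0)"
    by (auto simp: sum.delta)
  finally show ?thesis .
qed

lemma alin_eval:
  fixes c :: "nat \<Rightarrow> nat \<Rightarrow> 'k::field"
  shows "(\<Sum>i'<a. \<Sum>j<b. c i' j * avar i' j [(bx,xi,xj)]) =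
         (if \<not>bx \<and> xi < a \<and> xj < b then c xi xj else 0)"
  using sum_delta2[where c=c and a=a and b=b and P="\<not>bx" and xi=xi and xj=xj] by (simp add: avar_def ncvar_def)

lemma blin_eval:
  fixes d :: "nat \<Rightarrow> nat \<Rightarrow> 'k::field"
  shows "(\<Sum>j<b. \<Sum>l'<cc. d j l' * bvar j l' [(bx,xi,xj)]) =
         (if bx \<and> xi < b \<and> xj < cc then d xi xj else 0)"
  using sum_delta2[where c=d and a=b and b=cc and P="bx" and xi=xi and xj=xj] by (simp add: bvar_def ncvar_def)

lemma alin_zero:
  "length u \<noteq> 1 \<Longrightarrow> (\<Sum>i'<a. \<Sum>j<b. (c i' j :: 'k::field) * avar i' j u) = 0"
  by (auto simp: avar_def ncvar_def intro!: sum.neutral)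

lemma blin_zero:
  "length u \<noteq> 1 \<Longrightarrow> (\<Sum>j<b. \<Sum>l'<c. (d j l' :: 'k::field) * bvar j l' u) = 0"
  by (auto simp: bvar_def ncvar_def intro!: sum.neutral)


lemma tval_nth: "tval S i' j j' l' i l = (\<Sum>k<length S. fst (S!k) i' j * fst (snd (S!k)) j' l' * snd (snd (S!k)) i l)"
  unfolding tval_def by (simp add: sum_list_sum_nth atLeast0LessThan)

lemma ncmul_two:
  fixes p q :: "'k::field ncser"
  assumes p: "\<And>u. length u \<noteq> 1 \<Longrightarrow> p u = 0" and q: "\<And>u. length u \<noteq> 1 \<Longrightarrow> q u = 0"
  shows "ncmul p q [x, y] = p [x] * q [y]"
  using ncmul_lin[where p=p and q=q and w="[x,y]"] p q by simp

lemma ncmul_not_two: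
  fixes p q :: "'k::field ncser"
  assumes p: "\<And>u. length u \<noteq> 1 \<Longrightarrow> p u = 0" and q: "\<And>u. length u \<noteq> 1 \<Longrightarrow> q u = 0"
    and w: "\<And>x y. w \<noteq> [x, y]"
  shows "ncmul p q w = 0"
  using ncmul_lin[where p=p and q=q and w=w] p q w by (auto split: list.split)

lemma avar_zero: "length u \<noteq> 1 \<Longrightarrow> (avar i j u :: 'k::field) = 0"
  by (auto simp: avar_def ncvar_def)
lemma bvar_zero: "length u \<noteq> 1 \<Longrightarrow> (bvar i j u :: 'k::field) = 0"
  by (auto simp: bvar_def ncvar_def)

lemma link:
  assumes V: "valid a b c S"
  shows "bilinear_algorithm a b c (length S)
           (\<lambda>k i j. (of_int (fst (S!k) i j) :: 'k::field))
           (\<lambda>k j l. of_int (fst (snd (S!k)) j l))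
           (\<lambda>k i l. of_int (snd (snd (S!k)) i l))"
  unfolding bilinear_algorithm_def
proof (intro allI impI ext)
  fix i l and w :: "var list"
  assume i: "i < a" and l: "l < c"
  define P where "P k = (\<lambda>u. \<Sum>i'<a. \<Sum>j<b. (of_int (fst (S!k) i' j) :: 'k) * avar i' j u)" for k
  define Q where "Q k = (\<lambda>u. \<Sum>j<b. \<Sum>l'<c. (of_int (fst (snd (S!k)) j l') :: 'k) * bvar j l' u)" for k
  have P0: "P k u = 0" if "length u \<noteq> 1" for k u unfolding P_def using that by (rule alin_zero)
  have Q0: "Q k u = 0" if "length u \<noteq> 1" for k u unfolding Q_def using that by (rule blin_zero)
  show "(\<Sum>k<length S. of_int (snd (snd (S!k)) i l) *
            ncmul (\<lambda>u. \<Sum>i'<a. \<Sum>j<b. of_int (fst (S!k) i' j) * avar i' j u)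
                  (\<lambda>u. \<Sum>j<b. \<Sum>l'<c. of_int (fst (snd (S!k)) j l') * bvar j l' u) w)
        = (\<Sum>j<b. ncmul (avar i j) (bvar j l) w :: 'k)"
    (is "?L = ?R")
  proof (cases "\<exists>x y. w = [x, y]")
    have eqL: "?L = (\<Sum>k<length S. of_int (snd (snd (S!k)) i l) * ncmul (P k) (Q k) w)"
      by (simp add: P_def Q_def)
    case False
    then have w: "\<And>x y. w \<noteq> [x, y]" by blast
    have "ncmul (P k) (Q k) w = 0" for k
      by (rule ncmul_not_two) (auto intro: P0 Q0 simp: w)
    then have "?L = 0" unfolding eqL by simp
    moreover have "ncmul (avar i j) (bvar j l) w = (0::'k)" for j
      by (rule ncmul_not_two) (auto intro: avar_zero bvar_zero simp: w)
    then have "?R = 0" by simp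
    ultimately show ?thesis by simp
  next
    case True
    have eqL: "?L = (\<Sum>k<length S. of_int (snd (snd (S!k)) i l) * ncmul (P k) (Q k) w)"
      by (simp add: P_def Q_def)
    from True obtain bx xi xj by' yi yj where w: "w = [(bx,xi,xj),(by',yi,yj)]" by auto
    have L: "?L = (\<Sum>k<length S. of_int (snd (snd (S!k)) i l) *
                 ((if \<not>bx \<and> xi < a \<and> xj < b then of_int (fst (S!k) xi xj) else 0) *
                  (if by' \<and> yi < b \<and> yj < c then of_int (fst (snd (S!k)) yi yj) else 0)))"
    proof -
      have "ncmul (P k) (Q k) w = P k [(bx,xi,xj)] * Q k [(by',yi,yj)]" for k
        unfolding w by (rule ncmul_two) (auto intro: P0 Q0)
      then show ?thesis unfolding eqL by (simp add: P_def Q_def alin_eval blin_eval)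
    qed
    have R: "?R = (\<Sum>j<b. (if \<not>bx \<and> xi = i \<and> xj = j then 1 else 0) * (if by' \<and> yi = j \<and> yj = l then 1 else 0))"
    proof -
      have "ncmul (avar i j) (bvar j l) w = avar i j [(bx,xi,xj)] * (bvar j l [(by',yi,yj)] :: 'k)" for j
        unfolding w by (rule ncmul_two) (auto intro: avar_zero bvar_zero)
      then show ?thesis by (simp add: avar_def bvar_def ncvar_def)
    qed
    show ?thesis
    proof (cases "\<not>bx \<and> xi < a \<and> xj < b \<and> by' \<and> yi < b \<and> yj < c")
      case True
      then have "?L = of_int (tval S xi xj yi yj i l)"
        unfolding L tval_nth by (simp add: mult_ac)
      also have "\<dots> = (if xi = i \<and> xj = yi \<and> yj = l then 1 else 0)"
        using V True i l unfolding valid_def by simp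
      also have "\<dots> = (\<Sum>j<b. if j = xj then (if xi = i \<and> xj = yi \<and> yj = l then 1 else 0) else (0::'k))"
        using True by simp
      also have "\<dots> = ?R"
        unfolding R using True by (intro sum.cong) auto
      finally show ?thesis .
    next
      case False
      then have "?L = 0" unfolding L by auto
      moreover have "?R = 0" unfolding R using False i l by (auto intro!: sum.neutral)
      ultimately show ?thesis by simp
    qed
  qed
qed

theorem rank_from_valid:
  assumes "valid a b c S" "length S \<le> r"
  shows "matmul_rank_le TYPE('k::field) a b c r"
  unfolding matmul_rank_le_def using link[OF assms(1)] assms(2) by blast

definition addt :: "int list \<times> int list \<times> int list \<Rightarrow> int list list list \<Rightarrow> int list list list" where
  "addt t acc = (case t of (a,b,c) \<Rightarrow>
     map2 (\<lambda>x accx. if x = 0 then accx else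
        map2 (\<lambda>y accxy. if y = 0 then accxy else map2 (\<lambda>z v. v + x*y*z) c accxy) b accx) a acc)"

definition tsumL :: "nat \<Rightarrow> nat \<Rightarrow> nat \<Rightarrow> (int list \<times> int list \<times> int list) list \<Rightarrow> int list list list" where
  "tsumL dA dB dC S = foldr addt S (replicate dA (replicate dB (replicate dC 0)))"

definition mmL :: "nat \<Rightarrow> nat \<Rightarrow> nat \<Rightarrow> int list list list" where
  "mmL n m p = map (\<lambda>x. map (\<lambda>y. map (\<lambda>z.
      if x div m = z div p \<and> x mod m = y div p \<and> y mod p = z mod p then 1 else 0)
      [0..<n*p]) [0..<m*p]) [0..<n*m]"

definition shp :: "nat \<Rightarrow> nat \<Rightarrow> nat \<Rightarrow> int list list list \<Rightarrow> bool" where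
  "shp dA dB dC T \<longleftrightarrow> length T = dA \<and> (\<forall>x<dA. length (T!x) = dB \<and> (\<forall>y<dB. length (T!x!y) = dC))"

definition lens :: "nat \<Rightarrow> nat \<Rightarrow> nat \<Rightarrow> int list \<times> int list \<times> int list \<Rightarrow> bool" where
  "lens dA dB dC t \<longleftrightarrow> length (fst t) = dA \<and> length (fst (snd t)) = dB \<and> length (snd (snd t)) = dC"

lemma addt_shp:
  assumes "shp dA dB dC acc" "lens dA dB dC t"
  shows "shp dA dB dC (addt t acc)"
proof (cases t)
  case (fields a b c)
  show ?thesis unfolding shp_def
  proof (intro conjI allI impI)
    show "length (addt t acc) = dA" using assms fields by (simp add: addt_def shp_def lens_def)
  next
    fix x assume x: "x < dA"
    have ax: "addt t acc ! x = (if a!x = 0 then acc!x else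
        map2 (\<lambda>y accxy. if y = 0 then accxy else map2 (\<lambda>z v. v + a!x*y*z) c accxy) b (acc!x))"
      using assms fields x by (simp add: addt_def shp_def lens_def)
    show "length (addt t acc ! x) = dB" using assms fields x unfolding ax by (simp add: shp_def lens_def)
    fix y assume y: "y < dB"
    show "length (addt t acc ! x ! y) = dC" using assms fields x y unfolding ax by (simp add: shp_def lens_def)
  qed
qed

lemma addt_nth:
  assumes "shp dA dB dC acc" "lens dA dB dC t" "x < dA" "y < dB" "z < dC"
  shows "addt t acc ! x ! y ! z = acc ! x ! y ! z + fst t ! x * fst (snd t) ! y * snd (snd t) ! z"
proof (cases t)
  case (fields a b c)
  have ax: "addt t acc ! x = (if a!x = 0 then acc!x else
      map2 (\<lambda>y accxy. if y = 0 then accxy else map2 (\<lambda>z v. v + a!x*y*z) c accxy) b (acc!x))"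
    using assms fields by (simp add: addt_def shp_def lens_def)
  show ?thesis using assms fields unfolding ax by (simp add: shp_def lens_def)
qed

lemma tsumL_shp_nth:
  assumes "\<forall>t\<in>set S. lens dA dB dC t"
  shows "shp dA dB dC (tsumL dA dB dC S) \<and>
    (\<forall>x<dA. \<forall>y<dB. \<forall>z<dC. tsumL dA dB dC S ! x ! y ! z =
        (\<Sum>t\<leftarrow>S. fst t ! x * fst (snd t) ! y * snd (snd t) ! z))"
  using assms
proof (induction S)
  case Nil
  then show ?case by (simp add: tsumL_def shp_def)
next
  case (Cons t S)
  then have l: "lens dA dB dC t" and IH: "shp dA dB dC (tsumL dA dB dC S)"
     "\<forall>x<dA. \<forall>y<dB. \<forall>z<dC. tsumL dA dB dC S ! x ! y ! z = (\<Sum>t\<leftarrow>S. fst t ! x * fst (snd t) ! y * snd (snd t) ! z)"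
    by auto
  have e: "tsumL dA dB dC (t # S) = addt t (tsumL dA dB dC S)" by (simp add: tsumL_def)
  show ?case unfolding e using addt_shp[OF IH(1) l] addt_nth[OF IH(1) l] IH(2) by (simp add: algebra_simps)
qed

definition to_trm :: "nat \<Rightarrow> nat \<Rightarrow> int list \<times> int list \<times> int list \<Rightarrow> trm" where
  "to_trm b c t = (\<lambda>i j. fst t ! (i*b + j), \<lambda>j l. fst (snd t) ! (j*c + l), \<lambda>i l. snd (snd t) ! (i*c + l))"

definition checkL :: "nat \<Rightarrow> nat \<Rightarrow> nat \<Rightarrow> (int list \<times> int list \<times> int list) list \<Rightarrow> bool" where
  "checkL a b c S \<longleftrightarrow> list_all (lens (a*b) (b*c) (a*c)) S \<and> tsumL (a*b) (b*c) (a*c) S = mmL a b c"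

lemma idx_lt: "i < a \<Longrightarrow> j < b \<Longrightarrow> i*b + j < a*(b::nat)"
proof -
  assume "i < a" "j < b"
  then have "i*b + j < (i+1)*b" by simp
  also have "\<dots> \<le> a*b" using \<open>i < a\<close> by (intro mult_right_mono) auto
  finally show ?thesis .
qed

lemma checkL_valid:
  assumes "checkL a b c S"
  shows "valid a b c (map (to_trm b c) S)"
  unfolding valid_def
proof (intro allI impI)
  fix i' j j' l' i l
  assume h: "i' < a" "j < b" "j' < b" "l' < c" "i < a" "l < c"
  have L: "\<forall>t\<in>set S. lens (a*b) (b*c) (a*c) t" and E: "tsumL (a*b) (b*c) (a*c) S = mmL a b c"
    using assms by (auto simp: checkL_def list_all_iff)
  have x: "i'*b + j < a*b" and y: "j'*c + l' < b*c" and z: "i*c + l < a*c"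
    using h by (auto intro: idx_lt)
  have "tval (map (to_trm b c) S) i' j j' l' i l = tsumL (a*b) (b*c) (a*c) S ! (i'*b+j) ! (j'*c+l') ! (i*c+l)"
    using tsumL_shp_nth[OF L] x y z by (simp add: tval_def to_trm_def o_def)
  also have "\<dots> = mmL a b c ! (i'*b+j) ! (j'*c+l') ! (i*c+l)" by (simp add: E)
  also have "\<dots> = (if i' = i \<and> j = j' \<and> l' = l then 1 else 0)"
    using x y z h by (simp add: mmL_def)
  finally show "tval (map (to_trm b c) S) i' j j' l' i l = (if i' = i \<and> j = j' \<and> l' = l then 1 else 0)" .
qed

definition grp_terms :: "nat \<Rightarrow> nat \<Rightarrow> nat \<Rightarrow> fac \<Rightarrow> (fac \<times> fac) list \<Rightarrow> trm list \<Rightarrow> trm list" where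
  "grp_terms n2 m2 p2 v U G = map (\<lambda>g.
     (\<lambda>I J. \<Sum>s<length U. fst (U!s) (I div n2) (J div m2) * fst g (s*n2 + I mod n2) (J mod m2),
      \<lambda>J L. v (J div m2) (L div p2) * fst (snd g) (J mod m2) (L mod p2),
      \<lambda>I L. \<Sum>s<length U. snd (U!s) (I div n2) (L div p2) * snd (snd g) (s*n2 + I mod n2) (L mod p2))) G"

definition outer_terms :: "fac \<Rightarrow> (fac \<times> fac) list \<Rightarrow> trm list" where
  "outer_terms v U = map (\<lambda>uw. (fst uw, v, snd uw)) U"

lemma triple_sum:
  fixes X :: "'a \<Rightarrow> 'b \<Rightarrow> 'c::comm_ring_1"
  shows "(\<Sum>k\<in>K. (\<Sum>s\<in>S. X s k) * Y k * (\<Sum>s'\<in>S'. Z s' k)) = (\<Sum>s\<in>S. \<Sum>s'\<in>S'. \<Sum>k\<in>K. X s k * Y k * Z s' k)"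
proof -
  have "(\<Sum>k\<in>K. (\<Sum>s\<in>S. X s k) * Y k * (\<Sum>s'\<in>S'. Z s' k)) = (\<Sum>k\<in>K. \<Sum>s'\<in>S'. \<Sum>s\<in>S. X s k * Y k * Z s' k)"
    by (simp add: sum_distrib_left sum_distrib_right)
  also have "\<dots> = (\<Sum>k\<in>K. \<Sum>s\<in>S. \<Sum>s'\<in>S'. X s k * Y k * Z s' k)"
    by (intro sum.cong refl) (rule sum.swap)
  also have "\<dots> = (\<Sum>s\<in>S. \<Sum>k\<in>K. \<Sum>s'\<in>S'. X s k * Y k * Z s' k)"
    by (rule sum.swap)
  also have "\<dots> = (\<Sum>s\<in>S. \<Sum>s'\<in>S'. \<Sum>k\<in>K. X s k * Y k * Z s' k)"
    by (intro sum.cong refl) (rule sum.swap)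
  finally show ?thesis .
qed

lemma divmod_eq:
  assumes "i0 < n" "i1 < (n::nat)"
  shows "(s*n + i0 = s'*n + i1) \<longleftrightarrow> (s = s' \<and> i0 = i1)"
proof
  assume e: "s*n + i0 = s'*n + i1"
  have "(s*n + i0) div n = s" using assms by simp
  moreover have "(s'*n + i1) div n = s'" using assms by simp
  moreover have "(s*n + i0) mod n = i0" using assms by simp
  moreover have "(s'*n + i1) mod n = i1" using assms by simp
  ultimately show "s = s' \<and> i0 = i1" using e by metis
qed simp

lemma grp_tval:
  assumes V: "valid (length U * n2) m2 p2 G" and pos: "0 < n2" "0 < m2" "0 < p2"
  shows "tval (grp_terms n2 m2 p2 v U G) I' J J' L' I L =
     tval (outer_terms v U) (I' div n2) (J div m2) (J' div m2) (L' div p2) (I div n2) (L div p2) *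
     (if I' mod n2 = I mod n2 \<and> J mod m2 = J' mod m2 \<and> L' mod p2 = L mod p2 then 1 else 0)"
proof -
  let ?g = "length U"
  define A where "A s = fst (U!s) (I' div n2) (J div m2)" for s
  define vv where "vv = v (J' div m2) (L' div p2)"
  define C where "C s = snd (U!s) (I div n2) (L div p2)" for s
  define i0' where "i0' = I' mod n2"
  define i0 where "i0 = I mod n2"
  have i0: "i0 < n2" "i0' < n2" using pos by (auto simp: i0_def i0'_def)
  have "tval (grp_terms n2 m2 p2 v U G) I' J J' L' I L =
     (\<Sum>k<length G. (\<Sum>s<?g. A s * fst (G!k) (s*n2 + i0') (J mod m2)) *
        (vv * fst (snd (G!k)) (J' mod m2) (L' mod p2)) *
        (\<Sum>s'<?g. C s' * snd (snd (G!k)) (s'*n2 + i0) (L mod p2)))"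
    by (simp add: tval_nth grp_terms_def A_def vv_def C_def i0_def i0'_def)
  also have "\<dots> = (\<Sum>s<?g. \<Sum>s'<?g. \<Sum>k<length G. (A s * fst (G!k) (s*n2 + i0') (J mod m2)) *
        (vv * fst (snd (G!k)) (J' mod m2) (L' mod p2)) * (C s' * snd (snd (G!k)) (s'*n2 + i0) (L mod p2)))"
    by (rule triple_sum)
  also have "\<dots> = (\<Sum>s<?g. \<Sum>s'<?g. A s * vv * C s' *
       tval G (s*n2 + i0') (J mod m2) (J' mod m2) (L' mod p2) (s'*n2 + i0) (L mod p2))"
    by (simp add: tval_nth sum_distrib_left mult_ac)
  also have "\<dots> = (\<Sum>s<?g. \<Sum>s'<?g. A s * vv * C s' *
       (if s = s' \<and> i0' = i0 \<and> J mod m2 = J' mod m2 \<and> L' mod p2 = L mod p2 then 1 else 0))"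
  proof (intro sum.cong refl)
    fix s s' assume s: "s \<in> {..<?g}" and s': "s' \<in> {..<?g}"
    have b1: "s*n2 + i0' < ?g * n2"
    proof -
      have "s*n2 + i0' < (s+1)*n2" using i0 by simp
      also have "\<dots> \<le> ?g*n2" using s by (intro mult_right_mono) auto
      finally show ?thesis .
    qed
    have b2: "s'*n2 + i0 < ?g * n2"
    proof -
      have "s'*n2 + i0 < (s'+1)*n2" using i0 by simp
      also have "\<dots> \<le> ?g*n2" using s' by (intro mult_right_mono) auto
      finally show ?thesis .
    qed
    have "tval G (s*n2 + i0') (J mod m2) (J' mod m2) (L' mod p2) (s'*n2 + i0) (L mod p2) =
        (if s*n2 + i0' = s'*n2 + i0 \<and> J mod m2 = J' mod m2 \<and> L' mod p2 = L mod p2 then 1 else 0)"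
      using V b1 b2 pos unfolding valid_def by simp
    also have "\<dots> = (if s = s' \<and> i0' = i0 \<and> J mod m2 = J' mod m2 \<and> L' mod p2 = L mod p2 then 1 else 0)"
      using divmod_eq[OF i0(2) i0(1)] by simp
    finally show "A s * vv * C s' * tval G (s*n2 + i0') (J mod m2) (J' mod m2) (L' mod p2) (s'*n2 + i0) (L mod p2) =
       A s * vv * C s' * (if s = s' \<and> i0' = i0 \<and> J mod m2 = J' mod m2 \<and> L' mod p2 = L mod p2 then 1 else 0)"
      by simp
  qed
  also have "\<dots> = (\<Sum>s<?g. A s * vv * C s *
       (if i0' = i0 \<and> J mod m2 = J' mod m2 \<and> L' mod p2 = L mod p2 then 1 else 0))"
  proof (intro sum.cong refl)
    fix s assume s: "s \<in> {..<?g}"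
    have "(\<Sum>s'<?g. A s * vv * C s' * (if s = s' \<and> i0' = i0 \<and> J mod m2 = J' mod m2 \<and> L' mod p2 = L mod p2 then 1 else 0))
       = (\<Sum>s'<?g. if s' = s then A s * vv * C s' * (if i0' = i0 \<and> J mod m2 = J' mod m2 \<and> L' mod p2 = L mod p2 then 1 else 0) else 0)"
      by (intro sum.cong refl) auto
    also have "\<dots> = A s * vv * C s * (if i0' = i0 \<and> J mod m2 = J' mod m2 \<and> L' mod p2 = L mod p2 then 1 else 0)"
      using s by (subst sum.delta) auto
    finally show "(\<Sum>s'<?g. A s * vv * C s' * (if s = s' \<and> i0' = i0 \<and> J mod m2 = J' mod m2 \<and> L' mod p2 = L mod p2 then 1 else 0))
       = A s * vv * C s * (if i0' = i0 \<and> J mod m2 = J' mod m2 \<and> L' mod p2 = L mod p2 then 1 else 0)" .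
  qed
  also have "\<dots> = tval (outer_terms v U) (I' div n2) (J div m2) (J' div m2) (L' div p2) (I div n2) (L div p2) *
     (if I' mod n2 = I mod n2 \<and> J mod m2 = J' mod m2 \<and> L' mod p2 = L mod p2 then 1 else 0)"
    by (simp add: tval_nth outer_terms_def A_def vv_def C_def i0_def i0'_def sum_distrib_right)
  finally show ?thesis .
qed


definition big_terms :: "nat \<Rightarrow> nat \<Rightarrow> nat \<Rightarrow> (fac \<times> (fac \<times> fac) list \<times> trm list) list \<Rightarrow> trm list" where
  "big_terms n2 m2 p2 gs = concat (map (\<lambda>g. grp_terms n2 m2 p2 (fst g) (fst (snd g)) (snd (snd g))) gs)"

definition outer_all :: "(fac \<times> (fac \<times> fac) list \<times> trm list) list \<Rightarrow> trm list" where
  "outer_all gs = concat (map (\<lambda>g. outer_terms (fst g) (fst (snd g))) gs)"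

lemma tval_concat: "tval (concat (map f gs)) i' j j' l' i l = (\<Sum>g\<leftarrow>gs. tval (f g) i' j j' l' i l)"
  by (induction gs) (simp_all add: tval_def)

lemma eq_divmod: "(x::nat) = y \<longleftrightarrow> x div n = y div n \<and> x mod n = y mod n"
  by (metis div_mult_mod_eq)

lemma compose:
  assumes O: "valid n1 m1 p1 (outer_all gs)"
    and In: "\<forall>g\<in>set gs. valid (length (fst (snd g)) * n2) m2 p2 (snd (snd g))"
    and pos: "0 < n2" "0 < m2" "0 < p2"
  shows "valid (n1*n2) (m1*m2) (p1*p2) (big_terms n2 m2 p2 gs)"
  unfolding valid_def
proof (intro allI impI)
  fix I' J J' L' I L
  assume h: "I' < n1*n2" "J < m1*m2" "J' < m1*m2" "L' < p1*p2" "I < n1*n2" "L < p1*p2"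
  let ?d = "(if I' mod n2 = I mod n2 \<and> J mod m2 = J' mod m2 \<and> L' mod p2 = L mod p2 then 1 else 0) :: int"
  have "tval (big_terms n2 m2 p2 gs) I' J J' L' I L =
      (\<Sum>g\<leftarrow>gs. tval (grp_terms n2 m2 p2 (fst g) (fst (snd g)) (snd (snd g))) I' J J' L' I L)"
    unfolding big_terms_def by (rule tval_concat)
  also have "\<dots> = (\<Sum>g\<leftarrow>gs. tval (outer_terms (fst g) (fst (snd g))) (I' div n2) (J div m2) (J' div m2) (L' div p2) (I div n2) (L div p2) * ?d)"
    using In pos by (intro arg_cong[where f=sum_list] map_cong refl) (simp add: grp_tval)
  also have "\<dots> = tval (outer_all gs) (I' div n2) (J div m2) (J' div m2) (L' div p2) (I div n2) (L div p2) * ?d"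
    unfolding outer_all_def tval_concat by (simp add: sum_list_mult_const)
  also have "\<dots> = (if I' div n2 = I div n2 \<and> J div m2 = J' div m2 \<and> L' div p2 = L div p2 then 1 else 0) * ?d"
  proof -
    have "I' div n2 < n1" "J div m2 < m1" "J' div m2 < m1" "L' div p2 < p1" "I div n2 < n1" "L div p2 < p1"
      using h by (auto simp: less_mult_imp_div_less)
    then show ?thesis using O unfolding valid_def by simp
  qed
  also have "\<dots> = (if I' = I \<and> J = J' \<and> L' = L then 1 else 0)"
    using eq_divmod[of I' I n2] eq_divmod[of J J' m2] eq_divmod[of L' L p2] by auto
  finally show "tval (big_terms n2 m2 p2 gs) I' J J' L' I L = (if I' = I \<and> J = J' \<and> L' = L then 1 else 0)" .
qed

definition LL :: "(int list \<times> int list \<times> int list) list" where "LL = [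
([0, 0, 0, -1, 0, 0, 0, 0, 0], [-1, 1, 0, -1, 1, 0, 0, 0, 0], [0, -1, 1, 0, -1, 1, 0, 0, 0]),
([0, 0, 0, 0, 0, 0, -1, 1, 0], [-1, 0, 0, 0, 0, 0, 0, 0, 0], [0, 0, 0, 1, 1, 0, 1, 0, 0]),
([-1, 0, 0, 1, 0, 0, -1, 0, 0], [-1, 0, 1, -1, 0, 1, 0, 0, 0], [0, 0, 0, 0, 0, 0, 0, 1, -1]),
([1, -1, -1, 0, 0, 0, 0, 0, 0], [1, -1, -1, 1, -1, -1, 0, 1, 1], [0, -1, 0, 0, 0, 0, 0, 1, 0]),
([0, 0, 0, 1, -1, -1, 0, 0, 0], [0, 0, 0, -1, 1, 1, 0, 0, -1], [0, 0, 0, 0, -1, 0, 0, 0, 0]),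
([0, 1, 0, 0, -1, 0, 0, 0, 0], [0, 0, 0, 0, 0, -1, 0, 0, 1], [0, 0, 0, 1, 0, 1, 0, 0, 0]),
([1, 0, 0, 0, 0, 0, 0, 1, 0], [1, 0, 0, 1, -1, -1, 0, 1, 1], [1, 1, 0, 1, 1, 0, 0, -1, 0]),
([0, 1, 0, 0, 0, 0, 0, 1, 0], [0, 0, 0, 0, 1, 1, 0, -1, -1], [1, 1, 0, 1, 1, 0, 0, 0, 0]),
([0, 1, 1, 0, 0, 0, 0, 0, 0], [-1, 1, 1, -1, 1, 1, 0, 0, 0], [0, 0, 1, 0, 0, 1, 0, -1, 0]),
([0, -1, -1, 1, 0, 0, 0, 0, 0], [-1, 1, 1, -1, 1, 1, 0, 0, -1], [0, -1, 1, 0, 0, 1, 0, 0, 0]),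
([-1, 1, 0, 1, -1, 0, -1, 1, 0], [0, 0, 0, 1, 0, -1, 0, 0, 1], [0, 0, 0, -1, -1, 0, 0, 0, 0]),
([1, -1, -1, -1, 1, 1, 1, -1, -1], [0, 0, 0, 0, 0, 0, 0, 0, 1], [0, 0, 0, 0, 0, 1, 0, 0, 0]),
([0, 1, 1, 0, 0, 0, 0, 1, 1], [0, -1, -1, 0, 0, 0, 0, -1, -1], [0, 0, 0, 0, 0, 0, 0, -1, 0]),
([-1, 0, 0, 1, 0, 0, 0, 0, 0], [0, 0, -1, 0, 0, 0, 0, 0, 0], [0, -1, 1, 0, 0, 0, 0, 1, -1]),
([0, 0, 0, 0, 0, 0, 0, 0, -1], [0, 0, 0, 0, 0, 0, 1, 0, 0], [0, 0, 0, 0, 0, 0, -1, 0, 0]),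
([0, 0, 0, 0, 0, 1, 0, 0, 0], [0, 0, 0, -1, 1, 1, 1, -1, -1], [1, 0, 0, 1, 0, 0, 0, 0, 0]),
([-1, 0, 0, 1, 0, 0, -1, 1, 0], [1, 0, 0, 1, 0, -1, 0, 0, 1], [0, 0, 0, 1, 1, 0, 0, 1, -1]),
([0, 0, -1, 0, 0, 1, 0, 0, 0], [0, 0, 0, 0, 0, 0, 1, 0, 0], [-1, 0, 0, 0, 0, 0, 0, 0, 0]),
([0, 1, 0, -1, 0, 0, 0, 0, 0], [0, 0, 0, 0, 0, 1, 0, 0, -1], [0, -1, 1, 0, -1, 1, 0, 0, 0]),
([1, -1, -1, 0, 0, 0, 1, -1, -1], [0, -1, -1, 0, 0, 0, 0, 0, 0], [0, 0, 0, 0, 0, 0, 0, -1, 0]),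
([1, 0, 0, -1, 0, 0, 1, -1, -1], [0, 0, 0, 0, 0, 0, 0, 0, -1], [0, 0, 0, 0, 0, 1, 0, -1, 1]),
([-1, 1, 0, 0, 0, 1, 0, 0, 0], [0, 0, 0, -1, 1, 1, 0, -1, -1], [-1, 0, 0, -1, -1, 0, 0, 0, 0]),
([0, 0, 0, 0, 0, 0, 0, 1, 0], [1, 0, 0, 1, 0, 0, 0, 0, 0], [-1, -1, 0, -1, -1, 0, 1, 0, 1])]"

definition GG :: "(int list \<times> int list \<times> int list) list" where "GG = [
([-1, -1, 0, 0, 0, 1, 0, 0, -1, -1, -1, -1, 1, 1, -1, 0, 0, -1], [1, 0, -1, 0, -1, 0, 0, 1, 0], [0, 1, -1, 0, 0, 0, 0, 0, 0, 0, -1, 2, 0, 0, 0, 0, 0, -1]),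
([0, 0, 0, 1, 0, 0, 0, 0, 0, 0, 0, 0, 0, 0, 0, -1, 0, 0], [1, -1, 0, 0, 0, 0, 0, 0, 0], [0, -2, 2, 0, 0, 0, 0, -1, 1, 0, 1, -1, 0, -1, 1, 0, 1, -1]),
([-1, -1, -1, 0, 1, 1, -1, -1, -1, -1, -1, -1, 1, 0, 0, -1, -1, -1], [-1, 0, 0, 1, 0, 0, 0, -1, -1], [-2, 0, 0, -1, 0, -1, 1, 0, 2, 1, 0, 0, -2, 0, -1, -1, 0, -2]),
([-1, -1, 0, 0, 0, 0, -1, -2, -1, -1, -1, 0, 1, 1, 0, -1, -2, -1], [1, 0, 0, 0, -1, 0, -1, 1, 0], [1, 1, 0, 1, 0, 1, 0, 1, -1, -1, -1, 0, 1, 0, 1, 1, 0, 1]),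
([1, 1, 1, 0, 0, -1, 1, 1, 1, 1, 1, 1, -1, -1, 0, 1, 1, 1], [1, 0, 0, -1, 0, 0, 1, 0, 0], [2, 0, 0, 0, 0, 0, 1, 0, 0, -2, 0, -1, 1, 0, 0, 0, 0, 1]),
([-1, -1, 0, 0, 0, 0, -1, -1, 0, -1, -1, 0, 1, 1, 0, -1, -1, 0], [-1, 0, 0, 0, 0, 0, 1, 0, 0], [0, 1, 0, 0, 0, 1, 1, 1, -1, 0, -1, 0, 0, 0, 1, 0, 0, 1]),
([-1, -1, -1, -1, -1, -1, -1, -1, -1, -1, -1, -1, 1, 1, 1, -1, -1, -1], [0, 0, 0, 0, 0, 0, 0, 0, 1], [-1, 0, -1, -1, 0, -1, 1, 0, 1, 0, 0, 0, -1, 0, -1, -1, 0, -1]),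
([0, 1, 2, -1, 0, -1, 0, 0, 0, 0, 1, 2, 0, -1, -1, 0, 0, 1], [0, 0, 0, 0, 0, 0, -1, 0, 1], [-1, -1, 0, -1, -1, 0, 1, 1, 0, 0, 0, 0, -1, -1, 0, -1, -1, 0]),
([0, 0, 0, 0, -1, -1, 0, 0, 0, 0, 0, 0, 0, 0, 0, 0, 1, 1], [0, 0, 0, 0, 0, 0, -1, 1, 0], [0, 0, 0, 0, 0, 0, 1, 0, 1, 0, 0, 0, 0, 0, 0, -1, 0, -1]),
([-1, -1, -1, 2, 2, 2, 0, 0, 0, -1, -1, -1, 0, 0, 0, -1, -1, -1], [0, 0, 0, 0, -1, 0, 0, 0, 0], [0, 0, 0, 0, 0, 0, -1, -1, -1, 0, 0, 0, 0, 0, 0, 1, 1, 1]),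
([-2, -1, 0, 1, 0, 1, 1, 0, -1, -1, -1, -1, 2, 1, -1, 0, 0, -1], [1, 0, -1, 0, 0, 0, 0, 0, 0], [0, -1, 1, 0, 0, 0, 0, 0, 0, 0, 1, -1, 0, 0, 0, 0, 0, 0]),
([1, 1, 1, 0, 0, 0, 1, 1, 1, 1, 1, 1, -1, -1, -1, 1, 1, 1], [0, 0, 0, 0, 0, 0, -1, 1, 1], [2, 0, 0, 1, -1, 1, -1, 2, -2, -1, -1, 0, 2, -1, 1, 1, -1, 2]),
([0, 1, 0, -1, 0, -1, 0, 0, 1, 0, 1, 1, 0, -1, 1, 0, 0, 1], [1, 0, -1, -1, 0, 1, 1, 0, -1], [0, 0, 0, 0, 0, 0, 0, 0, 0, 0, 0, 1, 0, 0, 0, 0, 0, -1]),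
([-1, -1, -1, 2, 0, 0, 0, 0, 0, -1, -1, -1, 0, 1, 1, -1, 0, 0], [0, 1, 0, 0, -1, 0, 0, 0, 0], [0, -1, 1, 0, 0, 0, 0, 0, 0, 0, 0, 0, 0, -1, 1, 0, 0, 0]),
([-2, -2, 1, 0, 0, -2, 0, 0, 0, -2, -2, 1, 2, 2, 0, 0, 0, 1], [0, 0, 0, 0, 1, 0, 0, -1, 0], [-1, 0, -1, -1, -1, 0, 0, 0, 0, -1, -2, 1, -1, -1, 0, 1, 1, 0]),
([1, 2, 1, 0, -1, -1, 1, 2, 1, 1, 2, 1, -1, -1, 0, 1, 2, 1], [1, 0, 0, -1, 0, 0, 0, 0, 0], [0, 0, 0, 1, 0, 1, -1, 0, -1, 0, 0, 0, 1, 0, 1, 1, 0, 1]),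
([-1, -1, 0, 0, 1, 1, -1, -2, -1, -1, -2, -1, 1, 0, -1, -1, -2, -1], [1, 0, 0, -1, 1, 1, 0, -1, -1], [-1, 0, 0, 0, 0, 1, 0, 0, -1, 1, 0, 0, 0, 0, 1, 0, 0, 1]),
([1, 0, 0, 1, 0, 0, 1, 0, 0, 1, 0, 0, -1, 0, 0, 1, 0, 0], [0, 0, -1, -1, 1, 1, 1, -1, 0], [0, 0, -1, 0, 0, -1, 0, 0, 1, 0, 0, 1, 0, 0, -1, 0, 0, -2]),
([0, 0, 0, 0, 0, 1, -1, -1, -1, -1, -1, -1, 0, 0, -1, -1, -1, -1], [-1, 0, 0, 0, 1, 1, 0, -1, -1], [-1, 0, 1, 0, 0, 0, 0, 0, 1, 1, 0, 0, 0, 0, 1, 0, 0, -1]),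
([-1, -1, 0, 0, 0, 1, -1, -1, -1, -1, -1, -1, 1, 1, -1, -1, -1, -1], [0, 0, 0, -1, 1, 1, 1, -1, -1], [1, 0, -1, 0, 0, -1, 0, 0, 0, -1, 0, 1, 0, 0, -1, 0, 0, -1]),
([-1, -1, -1, 0, 0, 0, 0, 0, 0, -1, -1, -1, 1, 1, 1, 0, 0, 0], [0, 1, 0, 0, -1, 0, 0, 1, 0], [0, 2, -2, 0, 0, 0, 0, 1, -1, 0, -2, 1, 0, 1, -1, 0, 0, 1]),
([0, -1, 0, -1, 0, -1, 0, 1, 1, 0, 0, 1, 0, 1, 1, 0, 0, 1], [0, 0, 0, 1, 0, -1, 0, 0, 0], [0, 0, 0, 0, 0, 0, 0, 0, -1, 0, 0, 0, 0, 0, 0, 0, 0, 1]),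
([0, 0, 1, -1, -1, -2, 0, 0, 0, 0, 0, 1, 0, 0, 0, 0, 0, 1], [0, 0, 0, 0, 1, 0, 1, -1, -1], [-1, -1, 0, -1, -1, 0, 1, 1, 1, 0, 0, 0, -1, -1, 0, -1, -1, -1]),
([0, 0, 0, 0, -1, 0, 0, 0, 0, 0, 0, 0, 0, 0, 0, 0, 1, 0], [0, 0, 0, 1, -1, 0, -1, 1, 0], [0, 0, 0, 0, 0, 0, 1, 0, 1, -2, 0, -2, 0, 0, 0, 1, 0, 1]),
([0, 0, 0, 0, 1, 1, 0, -1, -1, 0, -1, -1, 0, -1, -1, 0, -1, -1], [0, -1, -1, 0, 0, 0, 0, 1, 1], [0, 0, 1, 0, 0, 1, 0, 0, -1, 0, 0, -1, 0, 0, 1, 0, 0, 1]),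
([1, 1, 1, 1, 1, 1, 1, 1, 1, 1, 1, 1, -1, -1, -1, 1, 1, 1], [0, 0, 0, 0, 0, 0, 1, -1, -1], [0, -1, 0, 0, -1, 0, 0, 1, 0, 0, 0, 0, 0, -1, 0, 0, -1, 0]),
([-1, -1, -1, 0, -2, 1, -1, -2, -1, -1, -1, -1, 1, 1, 0, -1, 0, -1], [0, 0, 0, -1, 1, 0, 1, -1, 0], [1, 0, 1, 1, 0, 1, 0, 0, 0, -1, 0, -1, 1, 0, 1, 1, 0, 1]),
([0, 0, 0, 1, 1, 1, -1, -1, -1, -1, -1, -1, -1, -1, -1, -1, -1, -1], [1, -1, -1, 0, 0, 0, 0, 0, 0], [0, -1, 2, 0, 0, 0, 0, 0, 1, 0, 1, -1, 0, 0, 1, 0, 0, -1]),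
([1, 1, 1, -2, -1, -1, 0, 0, 0, 1, 1, 1, 0, 0, 0, 1, 0, 0], [-1, 0, 0, 0, 1, 0, 0, 0, 0], [0, 2, -2, 0, 0, 0, 1, 1, 0, 0, -1, 1, 0, 1, -1, -1, -1, 0]),
([0, -1, -1, 0, 0, 0, 0, 0, 0, 0, -1, -1, 0, 1, 1, 0, 0, 0], [0, -1, 0, 0, 1, 0, 0, 0, 0], [0, 1, -1, 0, 1, -1, 0, -1, 1, 0, -1, 1, 0, 1, -1, 0, 1, -1]),
([0, 0, 0, 0, 1, 1, -1, -1, -1, -1, -1, -1, 0, -1, -1, -1, -1, -1], [0, 1, 1, 0, -1, -1, 0, 1, 1], [0, 0, 2, 0, 0, 0, 0, 0, 1, 0, 0, -1, 0, 0, 1, 0, 0, -1]),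
([0, 0, 0, 1, 1, 0, 0, 0, 0, 0, 0, 0, -1, -1, 0, 0, 0, 0], [-1, 0, 0, 0, 0, 0, 0, 0, 0], [1, 2, -1, 0, 0, 0, 1, 1, 0, 0, -1, 1, 1, 1, 0, -1, -1, 0]),
([1, 0, 0, -2, -1, -1, 0, 1, 1, 1, 1, 1, 0, 1, 1, 1, 1, 1], [-1, 1, 1, 0, -1, 0, 0, 0, 0], [0, 1, -1, 0, 0, 0, 0, 0, -1, 0, -1, 1, 0, 0, 0, 0, 0, 1]),
([1, 0, 0, 1, 0, 0, 1, 0, 0, 1, 0, 0, -1, 0, 0, 1, 0, 0], [1, -1, 0, 0, 0, 0, -1, 1, 0], [0, -1, 0, 0, 0, -1, 0, -1, 2, 0, 1, 0, 0, 0, -1, 0, 0, -2]),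
([0, 0, 0, 1, 1, 1, 0, 0, -1, 0, 0, -1, 0, 0, -1, 0, 0, -1], [0, 0, 0, 1, -1, -1, -1, 1, 1], [0, 0, -1, 0, 0, -1, 0, 0, 0, 0, 0, 0, 0, 0, -1, 0, 0, 0]),
([0, -1, -1, 1, 0, 0, 0, 0, 0, 0, -1, -1, 0, 1, 1, 0, 0, 0], [0, 1, 0, 0, -1, 0, 1, 0, -1], [0, 0, 0, 0, 1, -1, 0, -2, 2, 0, 1, 0, 0, 1, -1, 0, 1, -2]),
([0, 0, 0, 0, -1, -1, 1, 2, 1, 1, 2, 1, 0, 1, 1, 1, 2, 1], [0, 0, 0, 0, 1, 1, 0, -1, -1], [-1, 0, -1, 0, 0, 0, 0, 0, 0, 1, 0, 1, 0, 0, 0, 0, 0, 0]),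
([1, 1, -1, 0, 0, 2, 0, 0, 0, 1, 1, -1, -1, -1, 0, 0, 0, -1], [0, 0, 0, 0, 1, 0, 0, -1, 0], [-2, -1, -1, -2, -2, 0, 0, 0, 0, -1, -2, 1, -2, -2, 0, 1, 1, 0]),
([0, 0, 0, 0, 1, 1, 0, 0, 0, 0, 0, 0, 0, -1, -1, 0, 0, 0], [0, 0, 0, 0, 0, 0, 0, 1, 1], [-2, 0, -2, -1, 0, -1, 1, 0, 1, 1, 0, 1, -2, 0, -2, -1, 0, -1]),
([1, 0, 0, 0, -1, -1, 1, 1, 1, 1, 1, 1, -1, 1, 1, 1, 1, 1], [1, -1, -1, -1, 1, 1, 0, 0, 0], [0, 0, 0, 0, 0, 1, 0, 0, -2, 0, 0, 0, 0, 0, 1, 0, 0, 2]),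
([1, 0, 1, 0, 1, -1, 1, 1, 1, 1, 0, 1, -1, 0, 0, 1, -1, 1], [0, 0, 0, 1, -1, 0, -1, 1, 0], [-1, 0, -1, -1, 0, -1, 1, 0, 1, 0, 0, 0, -1, 0, -1, -1, 0, -1]),
([1, 0, 0, 1, 0, 0, 1, 1, 1, 1, 0, 0, -1, 0, 0, 1, 1, 1], [1, 0, 0, 0, -1, 0, 0, 1, -1], [1, 1, 0, 1, 0, 1, -1, 1, -2, 0, -1, 1, 1, 0, 1, 1, 0, 1]),
([1, 1, 1, 0, 0, -1, 0, 0, 0, 1, 1, 1, -1, -1, 0, 0, 0, 0], [1, 0, 0, 0, -1, 0, 0, 1, 0], [0, 2, -2, 0, 0, 0, 0, 1, -1, 1, -1, 2, 0, 1, -1, -1, -1, 0])]"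

definition DD :: "(int list \<times> (int list \<times> int list) list \<times> (int list \<times> int list \<times> int list) list) list" where "DD = [
([0, 0, 0, 0, 0, 1, 0, 0, -1], [([0, -1, 0, 0, 1, 0, 0, 0, 0], [0, 0, 0, 1, 0, 1, 0, 0, 0]), ([0, 1, 0, -1, 0, 0, 0, 0, 0], [0, -1, 1, 0, -1, 1, 0, 0, 0])], GG),
([0, 0, 0, 0, 0, 0, 0, 0, 1], [([1, -1, -1, -1, 1, 1, 1, -1, -1], [0, 0, 0, 0, 0, 1, 0, 0, 0]), ([-1, 0, 0, 1, 0, 0, -1, 1, 1], [0, 0, 0, 0, 0, 1, 0, -1, 1])], GG),
([0, 0, 0, 0, 0, 0, 1, 0, 0], [([0, 0, 0, 0, 0, 0, 0, 0, -1], [0, 0, 0, 0, 0, 0, -1, 0, 0]), ([0, 0, -1, 0, 0, 1, 0, 0, 0], [-1, 0, 0, 0, 0, 0, 0, 0, 0])], GG),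
([-1, 1, 0, -1, 1, 0, 0, 0, 0], [([0, 0, 0, -1, 0, 0, 0, 0, 0], [0, -1, 1, 0, -1, 1, 0, 0, 0])], LL),
([-1, 0, 0, 0, 0, 0, 0, 0, 0], [([0, 0, 0, 0, 0, 0, -1, 1, 0], [0, 0, 0, 1, 1, 0, 1, 0, 0])], LL),
([-1, 0, 1, -1, 0, 1, 0, 0, 0], [([-1, 0, 0, 1, 0, 0, -1, 0, 0], [0, 0, 0, 0, 0, 0, 0, 1, -1])], LL),
([1, -1, -1, 1, -1, -1, 0, 1, 1], [([1, -1, -1, 0, 0, 0, 0, 0, 0], [0, -1, 0, 0, 0, 0, 0, 1, 0])], LL),
([0, 0, 0, -1, 1, 1, 0, 0, -1], [([0, 0, 0, 1, -1, -1, 0, 0, 0], [0, 0, 0, 0, -1, 0, 0, 0, 0])], LL),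
([1, 0, 0, 1, -1, -1, 0, 1, 1], [([1, 0, 0, 0, 0, 0, 0, 1, 0], [1, 1, 0, 1, 1, 0, 0, -1, 0])], LL),
([0, 0, 0, 0, 1, 1, 0, -1, -1], [([0, 1, 0, 0, 0, 0, 0, 1, 0], [1, 1, 0, 1, 1, 0, 0, 0, 0])], LL),
([-1, 1, 1, -1, 1, 1, 0, 0, 0], [([0, 1, 1, 0, 0, 0, 0, 0, 0], [0, 0, 1, 0, 0, 1, 0, -1, 0])], LL),
([-1, 1, 1, -1, 1, 1, 0, 0, -1], [([0, -1, -1, 1, 0, 0, 0, 0, 0], [0, -1, 1, 0, 0, 1, 0, 0, 0])], LL),
([0, 0, 0, 1, 0, -1, 0, 0, 1], [([-1, 1, 0, 1, -1, 0, -1, 1, 0], [0, 0, 0, -1, -1, 0, 0, 0, 0])], LL),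
([0, -1, -1, 0, 0, 0, 0, -1, -1], [([0, 1, 1, 0, 0, 0, 0, 1, 1], [0, 0, 0, 0, 0, 0, 0, -1, 0])], LL),
([0, 0, -1, 0, 0, 0, 0, 0, 0], [([-1, 0, 0, 1, 0, 0, 0, 0, 0], [0, -1, 1, 0, 0, 0, 0, 1, -1])], LL),
([0, 0, 0, -1, 1, 1, 1, -1, -1], [([0, 0, 0, 0, 0, 1, 0, 0, 0], [1, 0, 0, 1, 0, 0, 0, 0, 0])], LL),
([1, 0, 0, 1, 0, -1, 0, 0, 1], [([-1, 0, 0, 1, 0, 0, -1, 1, 0], [0, 0, 0, 1, 1, 0, 0, 1, -1])], LL),
([0, -1, -1, 0, 0, 0, 0, 0, 0], [([1, -1, -1, 0, 0, 0, 1, -1, -1], [0, 0, 0, 0, 0, 0, 0, -1, 0])], LL),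
([0, 0, 0, -1, 1, 1, 0, -1, -1], [([-1, 1, 0, 0, 0, 1, 0, 0, 0], [-1, 0, 0, -1, -1, 0, 0, 0, 0])], LL),
([1, 0, 0, 1, 0, 0, 0, 0, 0], [([0, 0, 0, 0, 0, 0, 0, 1, 0], [-1, -1, 0, -1, -1, 0, 1, 0, 1])], LL)]"


definition lf :: "nat \<Rightarrow> int list \<Rightarrow> fac" where "lf c xs = (\<lambda>i j. xs ! (i*c + j))"

definition mkgrp :: "int list \<times> (int list \<times> int list) list \<times> (int list \<times> int list \<times> int list) list \<Rightarrow> fac \<times> (fac \<times> fac) list \<times> trm list" where
  "mkgrp d = (lf 3 (fst d), map (\<lambda>uw. (lf 3 (fst uw), lf 3 (snd uw))) (fst (snd d)), map (to_trm 3 3) (snd (snd d)))"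

definition outL :: "(int list \<times> (int list \<times> int list) list \<times> (int list \<times> int list \<times> int list) list) list \<Rightarrow> (int list \<times> int list \<times> int list) list" where
  "outL D = concat (map (\<lambda>d. map (\<lambda>uw. (fst uw, fst d, snd uw)) (fst (snd d))) D)"

lemma outer_all_mk: "outer_all (map mkgrp D) = map (to_trm 3 3) (outL D)"
  by (induction D) (simp_all add: outer_all_def outer_terms_def mkgrp_def outL_def to_trm_def lf_def)

lemma big_len: "length (big_terms 3 3 3 (map mkgrp D)) = sum_list (map (\<lambda>d. length (snd (snd d))) D)"
  by (induction D) (simp_all add: big_terms_def grp_terms_def mkgrp_def)

lemma outer_ok: "checkL 3 3 3 (outL DD)"
  by code_simp

lemma L_ok: "checkL 3 3 3 LL"
  by code_simp

lemma G_ok: "checkL 6 3 3 GG"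
  by code_simp

lemma DD_shape: "\<forall>d\<in>set DD. (length (fst (snd d)) = 1 \<and> snd (snd d) = LL) \<or> (length (fst (snd d)) = 2 \<and> snd (snd d) = GG)"
  by (simp add: DD_def)

lemma len_LL: "length LL = 23" by (simp add: LL_def)
lemma len_GG: "length GG = 43" by (simp add: GG_def)

lemma len_big: "length (big_terms 3 3 3 (map mkgrp DD)) = 520"
  unfolding big_len by (simp add: DD_def len_LL len_GG)

lemma valid_big: "valid 9 9 9 (big_terms 3 3 3 (map mkgrp DD))"
proof -
  have O: "valid 3 3 3 (outer_all (map mkgrp DD))"
    unfolding outer_all_mk by (rule checkL_valid[OF outer_ok])
  have In: "\<forall>g\<in>set (map mkgrp DD). valid (length (fst (snd g)) * 3) 3 3 (snd (snd g))"
  proof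
    fix g assume "g \<in> set (map mkgrp DD)"
    then obtain d where d: "d \<in> set DD" and g: "g = mkgrp d" by auto
    have lg: "length (fst (snd g)) = length (fst (snd d))" and sg: "snd (snd g) = map (to_trm 3 3) (snd (snd d))"
      by (simp_all add: g mkgrp_def)
    from DD_shape d show "valid (length (fst (snd g)) * 3) 3 3 (snd (snd g))"
      unfolding lg sg using checkL_valid[OF L_ok] checkL_valid[OF G_ok] by auto
  qed
  have "valid (3*3) (3*3) (3*3) (big_terms 3 3 3 (map mkgrp DD))"
    by (rule compose[OF O In]) simp_all
  then show ?thesis by simp
qed

theorem mainTheorem4:
  shows "matmul_rank_le TYPE('k::field) 9 9 9 520"
  by (rule rank_from_valid[OF valid_big]) (simp add: len_big)

end
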